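(* Let $\mathbf{A}\in\mathbb{C}^{N\times N}$ be a nonzero matrix (the weighted adjacency matrix of a graph), and let $\lambda_{\max}$ denote an eigenvalue of $\mathbf{A}$ of largest magnitude, i.e. $|\lambda_{\max}|\ge|\lambda|$ for every eigenvalue $\lambda$ of $\mathbf{A}$. Let $\lambda_m,\lambda_n\in\mathbb{C}$ be two distinct eigenvalues of $\mathbf{A}$ with corresponding eigenvectors $\mathbf{v}_m,\mathbf{v}_n$, normalized so that $\|\mathbf{v}_m\|_1=\|\mathbf{v}_n\|_1=1$. If $\big||\lambda_{\max}|-\lambda_m\big|<\big||\lambda_{\max}|-\lambda_n\big|$ (i.e. $\lambda_m$ is closer than $\lambda_n$ to the real number $|\lambda_{\max}|$ in the complex plane), then $\mathrm{TV}_G(\mathbf{v}_m)<\mathrm{TV}_G(\mathbf{v}_n)$.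
   Context: For a graph signal $\mathbf{s}\in\mathbb{C}^N$, the total variation on the graph is $\mathrm{TV}_G(\mathbf{s})=\|\mathbf{s}-\mathbf{A}^{\mathrm{norm}}\mathbf{s}\|_1$, where $\mathbf{A}^{\mathrm{norm}}=\frac{1}{|\lambda_{\max}|}\mathbf{A}$ is the normalized adjacency matrix. *)

theory Defs
  imports "HOL-Analysis.Analysis"
begin

definition is_eigenvalue :: "complex^'n^'n \<Rightarrow> complex \<Rightarrow> bool" where
  "is_eigenvalue A l \<longleftrightarrow> (\<exists>v. v \<noteq> 0 \<and> A *v v = l *s v)"

definition l1_norm :: "complex^'n \<Rightarrow> real" where
  "l1_norm s = (\<Sum>i\<in>UNIV. cmod (s $ i))"

definition A_norm :: "complex^'n^'n \<Rightarrow> complex \<Rightarrow> complex^'n^'n" where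
  "A_norm A lmax = (1 / cmod lmax) *\<^sub>R A"

definition TV_G :: "complex^'n^'n \<Rightarrow> complex \<Rightarrow> complex^'n \<Rightarrow> real" where
  "TV_G A lmax s = l1_norm (s - A_norm A lmax *v s)"

end

theory Submission
  imports Defs
begin

lemma l1_smult: "l1_norm (a *s v) = cmod a * l1_norm v"
  unfolding l1_norm_def by (simp add: norm_mult sum_distrib_left)

lemma tv_eig:
  assumes "A *v v = l *s v" "c > 0" "c = cmod lmax"
  shows "TV_G A lmax v = cmod (1 - l / complex_of_real c) * l1_norm v"
proof -
  have "v - A_norm A lmax *v v = (1 - l / complex_of_real c) *s v"
  proof -
    have "A_norm A lmax *v v = (1 / c) *\<^sub>R (A *v v)"
      unfolding A_norm_def assms(3) by (simp add: vec_eq_iff matrix_vector_mult_def scaleR_sum_right)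
    also have "\<dots> = (1 / c) *\<^sub>R (l *s v)" using assms(1) by simp
    finally show ?thesis using assms(2)
      by (simp add: vec_eq_iff field_simps of_real_def)
  qed
  thus ?thesis unfolding TV_G_def by (metis l1_smult)
qed

theorem theorem2:
  fixes A :: "complex^'n^'n" and lmax lm ln :: complex and vm vn :: "complex^'n"
  assumes "A \<noteq> 0"
    and "is_eigenvalue A lmax"
    and "\<And>l. is_eigenvalue A l \<Longrightarrow> cmod l \<le> cmod lmax"
    and "is_eigenvalue A lm" and "is_eigenvalue A ln" and "lm \<noteq> ln"
    and "A *v vm = lm *s vm" and "A *v vn = ln *s vn"
    and "l1_norm vm = 1" and "l1_norm vn = 1"
    and "cmod (complex_of_real (cmod lmax) - lm) < cmod (complex_of_real (cmod lmax) - ln)"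
  shows "TV_G A lmax vm < TV_G A lmax vn"
proof -
  define c where "c = cmod lmax"
  have "c > 0"
  proof (rule ccontr)
    assume "\<not> c > 0"
    hence "c = 0" unfolding c_def by simp
    hence "lm = 0" "ln = 0" using assms(3)[OF assms(4)] assms(3)[OF assms(5)] c_def by auto
    thus False using assms(6) by simp
  qed
  have e: "cmod (1 - l / complex_of_real c) = cmod (complex_of_real c - l) / c" for l
  proof -
    have "1 - l / complex_of_real c = (complex_of_real c - l) / complex_of_real c"
      using \<open>c > 0\<close> by (simp add: field_simps)
    thus ?thesis using \<open>c > 0\<close> by (simp add: norm_divide)
  qed
  show ?thesis
    using tv_eig[OF assms(7) \<open>c>0\<close> c_def] tv_eig[OF assms(8) \<open>c>0\<close> c_def] assms(9,10,11)
      \<open>c>0\<close> unfolding e c_def[symmetric] by (simp add: divide_strict_right_mono)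
qed

end
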